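(* Let $\Theta=\tilde p/p$ be a rational inner function on $\mathbb{D}^2$, where $p(z)=a+bz_1+cz_2$ is a polynomial with a zero on $\mathbb{T}^2$. Then $|a|=|b|+|c|$.
   Context: $\mathbb{D}$ is the open unit disk, $\mathbb{T}$ the unit circle. Here $\Theta=\tilde p/p$ means the standard representation of a rational inner function: $p$ has no zeros on $\mathbb{D}^2$ (so that $\Theta$ is holomorphic on $\mathbb{D}^2$), and $\tilde p(z)=z_1z_2\overline{p(1/\bar z_1,1/\bar z_2)}$. *)

theory Defs
  imports "HOL-Analysis.Analysis"
begin

definition lin_poly :: "complex \<Rightarrow> complex \<Rightarrow> complex \<Rightarrow> complex \<Rightarrow> complex \<Rightarrow> complex" where
  "lin_poly a b c z1 z2 = a + b * z1 + c * z2"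

text \<open>Standard representation of a rational inner function Theta = ptilde / p:
  p has no zeros on the open bidisk D^2.\<close>
definition no_zeros_bidisk :: "(complex \<Rightarrow> complex \<Rightarrow> complex) \<Rightarrow> bool" where
  "no_zeros_bidisk p \<longleftrightarrow> (\<forall>z1 z2. norm z1 < 1 \<longrightarrow> norm z2 < 1 \<longrightarrow> p z1 z2 \<noteq> 0)"

definition has_zero_torus :: "(complex \<Rightarrow> complex \<Rightarrow> complex) \<Rightarrow> bool" where
  "has_zero_torus p \<longleftrightarrow> (\<exists>z1 z2. norm z1 = 1 \<and> norm z2 = 1 \<and> p z1 z2 = 0)"

end

theory Submission
  imports Defs
begin

lemma mul_cnj_sgn: "(b::complex) * cnj (sgn b) = of_real (norm b)"
proof (cases "b = 0")
  case False
  then show ?thesis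
  proof -
    have "b * cnj (sgn b) = (b * cnj b) / of_real (norm b)"
      by (simp add: sgn_div_norm scaleR_conv_of_real divide_inverse)
    also have "\<dots> = of_real (norm b)^2 / of_real (norm b)"
      using complex_norm_square[of b] by (simp add: complex_mult_cnj)
    also have "\<dots> = of_real (norm b)" using False by (simp add: power2_eq_square)
    finally show ?thesis .
  qed
qed simp

theorem proposition5p3:
  fixes a b c :: complex
  assumes "no_zeros_bidisk (lin_poly a b c)"
    and "has_zero_torus (lin_poly a b c)"
  shows "norm a = norm b + norm c"
proof -
  obtain z1 z2 where z: "norm z1 = 1" "norm z2 = 1" "a + b*z1 + c*z2 = 0"
    using assms(2) unfolding has_zero_torus_def lin_poly_def by auto
  have "a = - (b*z1 + c*z2)" using z(3) by (simp add: algebra_simps eq_neg_iff_add_eq_0)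
  hence "norm a = norm (b*z1 + c*z2)" by (metis norm_minus_cancel)
  hence "norm a \<le> norm (b*z1) + norm (c*z2)" using norm_triangle_ineq by metis
  hence le: "norm a \<le> norm b + norm c" using z by (simp add: norm_mult)
  show ?thesis
  proof (rule ccontr)
    assume "norm a \<noteq> norm b + norm c"
    hence lt: "norm a < norm b + norm c" using le by simp
    define t where "t = norm a / (norm b + norm c)"
    have pos: "norm b + norm c > 0" using lt norm_ge_zero[of a] by linarith
    have t0: "0 \<le> t" and t1: "t < 1" using lt pos by (auto simp: t_def)
    define w1 where "w1 = - of_real t * sgn a * cnj (sgn b)"
    define w2 where "w2 = - of_real t * sgn a * cnj (sgn c)"
    have n1: "norm w1 < 1"
    proof -
      have "norm w1 \<le> t" unfolding w1_def using t0
        by (simp add: norm_mult norm_sgn)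
      thus ?thesis using t1 by linarith
    qed
    have n2: "norm w2 < 1"
    proof -
      have "norm w2 \<le> t" unfolding w2_def using t0
        by (simp add: norm_mult norm_sgn)
      thus ?thesis using t1 by linarith
    qed
    have "b*w1 + c*w2 = - of_real t * sgn a * (b * cnj (sgn b) + c * cnj (sgn c))"
      unfolding w1_def w2_def by (simp add: algebra_simps)
    also have "\<dots> = - of_real t * sgn a * of_real (norm b + norm c)"
      by (simp add: mul_cnj_sgn)
    also have "\<dots> = - sgn a * of_real (norm a)"
    proof -
      have "of_real t * of_real (norm b + norm c) = (of_real (norm a) :: complex)"
      proof -
        have "t * (norm b + norm c) = norm a" using pos by (simp add: t_def)
        thus ?thesis by (metis of_real_mult)
      qed
      thus ?thesis by (metis mult.assoc mult.commute mult_minus_left)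
    qed
    also have "\<dots> = - a"
      by (cases "a = 0") (simp_all add: sgn_div_norm scaleR_conv_of_real divide_inverse)
      finally have "a + b*w1 + c*w2 = 0" by (simp add: algebra_simps)
    thus False using assms(1) n1 n2 unfolding no_zeros_bidisk_def lin_poly_def by auto
  qed
qed

end
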